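(* Fix an integer $L\ge1$, $\alpha>2$ and $\gamma>0$, and let $\Delta=\pi\,\frac{2}{\alpha}\,\Gamma(2/\alpha)\,\Gamma(1-2/\alpha)$. For $\lambda\ge 0$ define $$F(\gamma,\lambda)=1-\sum_{i=0}^{L-1}\frac{(\lambda\Delta\gamma^{2/\alpha})^i}{i!}\exp\!\left(-\lambda\Delta\gamma^{2/\alpha}\right)$$ (the outage probability of the optimum combining receiver with $L$ antennas in a Poisson field of interferers of density $\lambda$ with Rayleigh fading, in the interference-limited regime $\sigma^2=0$, with normalized threshold $\gamma$). Let $$\lambda_{\max}=\arg\max_{0\le\lambda<\infty}\lambda\bigl(1-F(\gamma,\lambda)\bigr).$$ Then $$\lambda_{\max}=\frac{g(L)}{\Delta\gamma^{2/\alpha}},$$ where $g(L)$ is the positive root of the polynomial $$Q(t)=\sum_{i=0}^{L-1}\frac{t^i}{i!}-\frac{t^L}{(L-1)!},$$ and this root satisfies $\frac{L}{2}\le g(L)\le L$. Moreover, the maximal spatial throughput is $$T_{\max}=\lambda_{\max}\bigl(1-F(\gamma,\lambda_{\max})\bigr)=\frac{g(L)^{L+1}}{(L-1)!\,\Delta\gamma^{2/\alpha}}\exp(-g(L)).$$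
   Context: $\Gamma(\cdot)$ denotes the Gamma function. The quantity $\lambda(1-F(\gamma,\lambda))$ is the spatial throughput (mean number of successful transmissions per unit area) of a single-hop ALOHA network with contention density $\lambda$. *)

theory Defs
  imports "HOL-Analysis.Analysis"
begin

definition Delta :: "real \<Rightarrow> real" where
  "Delta alpha = pi * (2 / alpha) * Gamma (2 / alpha) * Gamma (1 - 2 / alpha)"

definition outage :: "nat \<Rightarrow> real \<Rightarrow> real \<Rightarrow> real \<Rightarrow> real" where
  "outage L alpha gamma lambda =
     1 - (\<Sum>i<L. (lambda * Delta alpha * gamma powr (2 / alpha)) ^ i / fact i)
           * exp (- (lambda * Delta alpha * gamma powr (2 / alpha)))"

definition throughput :: "nat \<Rightarrow> real \<Rightarrow> real \<Rightarrow> real \<Rightarrow> real" where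
  "throughput L alpha gamma lambda = lambda * (1 - outage L alpha gamma lambda)"

definition Qpoly :: "nat \<Rightarrow> real \<Rightarrow> real" where
  "Qpoly L t = (\<Sum>i<L. t ^ i / fact i) - t ^ L / fact (L - 1)"

end

theory Submission
  imports Defs
begin

lemma term_step:
  fixes x :: real assumes "x > 0"
  shows "x ^ Suc j / fact (Suc j) = x ^ j / fact j * (x / real (Suc j))"
  by (simp add: field_simps)

lemma up_bound:
  fixes m :: nat
  assumes "i \<le> m"
  shows "(real (Suc m)) ^ i / fact i \<le> (real (Suc m)) ^ m / fact m"
  using assms
proof (induction i rule: inc_induct)
  case base then show ?case by simp
next
  case (step n)
  let ?x = "real (Suc m)"
  have "?x ^ n / fact n \<le> ?x ^ n / fact n * (?x / real (Suc n))"
  proof -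
    have "?x / real (Suc n) \<ge> 1" using step(2) by simp
    moreover have "?x ^ n / fact n \<ge> 0" by simp
    ultimately show ?thesis by (metis mult_le_cancel_left1 mult.commute order.trans order_refl mult_left_mono mult_1_right)
  qed
  also have "\<dots> = ?x ^ Suc n / fact (Suc n)" using term_step[of ?x n] by simp
  finally show ?case using step(3) by linarith
qed

lemma low_bound:
  fixes m :: nat
  assumes "m - Suc m div 2 \<le> i" "i \<le> m"
  shows "(real (Suc m) / 2) ^ i / fact i \<ge> (real (Suc m) / 2) ^ m / fact m"
  using assms(2,1)
proof (induction i rule: inc_induct)
  case base then show ?case by simp
next
  case (step n)
  let ?x = "real (Suc m) / 2"
  have le: "?x / real (Suc n) \<le> 1" using step(4) by (simp add: field_simps; linarith)
  have "?x ^ Suc n / fact (Suc n) = ?x ^ n / fact n * (?x / real (Suc n))"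
    using term_step[of ?x n] by simp
  also have "\<dots> \<le> ?x ^ n / fact n"
    by (rule mult_left_le[OF le]) simp
  moreover have "?x ^ m / fact m \<le> ?x ^ Suc n / fact (Suc n)"
    using step.IH step.prems by simp
  ultimately show ?case by linarith
qed

lemma Q_Suc: "Qpoly (Suc m) t = (\<Sum>i<Suc m. t ^ i / fact i) - t * (t ^ m / fact m)"
  by (simp add: Qpoly_def)

lemma Q_at_L: "Qpoly (Suc m) (real (Suc m)) \<le> 0"
proof -
  let ?x = "real (Suc m)"
  have "(\<Sum>i<Suc m. ?x ^ i / fact i) \<le> (\<Sum>i<Suc m. ?x ^ m / fact m)"
    by (rule sum_mono) (use up_bound in auto)
  also have "\<dots> = ?x * (?x ^ m / fact m)" by simp
  finally show ?thesis unfolding Q_Suc by linarith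
qed

lemma Q_at_half: "Qpoly (Suc m) (real (Suc m) / 2) \<ge> 0"
proof -
  let ?x = "real (Suc m) / 2"
  let ?k = "Suc m div 2"
  have km: "?k \<le> m" by simp
  have "(\<Sum>i\<in>{m - ?k..m}. ?x ^ m / fact m) \<le> (\<Sum>i\<in>{m - ?k..m}. ?x ^ i / fact i)"
    by (rule sum_mono) (use low_bound in auto)
  also have "\<dots> \<le> (\<Sum>i<Suc m. ?x ^ i / fact i)"
    by (rule sum_mono2) auto
  finally have A: "real (card {m - ?k..m}) * (?x ^ m / fact m) \<le> (\<Sum>i<Suc m. ?x ^ i / fact i)"
    by simp
  have c: "card {m - ?k..m} = Suc ?k" using km by simp
  have n: "Suc m \<le> 2 * Suc ?k" by presburger
  have "real (Suc m) \<le> real (2 * Suc ?k)" using n by (simp only: of_nat_le_iff)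
  hence "real (Suc ?k) \<ge> ?x" by simp
  hence "?x * (?x ^ m / fact m) \<le> real (Suc ?k) * (?x ^ m / fact m)"
    by (intro mult_right_mono) auto
  with A[unfolded c] show ?thesis unfolding Q_Suc by linarith
qed

definition R :: "nat \<Rightarrow> real \<Rightarrow> real" where
  "R m x = (\<Sum>i<Suc m. inverse (fact i * x ^ (Suc m - i))) - inverse (fact m)"

lemma Q_R: assumes "x > 0" shows "Qpoly (Suc m) x = x ^ Suc m * R m x"
proof -
  have "\<And>i. i < Suc m \<Longrightarrow> x ^ i / fact i = x ^ Suc m * inverse (fact i * x ^ (Suc m - i))"
  proof -
    fix i assume "i < Suc m"
    hence "x ^ Suc m = x ^ i * x ^ (Suc m - i)" by (simp add: power_add[symmetric])
    thus "x ^ i / fact i = x ^ Suc m * inverse (fact i * x ^ (Suc m - i))"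
      using assms by (simp add: field_simps)
  qed
  hence "(\<Sum>i<Suc m. x ^ i / fact i) = (\<Sum>i<Suc m. x ^ Suc m * inverse (fact i * x ^ (Suc m - i)))"
    by (intro sum.cong) auto
  also have "\<dots> = x ^ Suc m * (\<Sum>i<Suc m. inverse (fact i * x ^ (Suc m - i)))"
    by (simp only: sum_distrib_left)
  finally have "(\<Sum>i<Suc m. x ^ i / fact i) = x ^ Suc m * (\<Sum>i<Suc m. inverse (fact i * x ^ (Suc m - i)))" .
  moreover have "x * (x ^ m / fact m) = x ^ Suc m * inverse (fact m)" by (simp add: field_simps)
  ultimately show ?thesis unfolding Q_Suc R_def by (simp add: right_diff_distrib)
qed

lemma R_mono: assumes "0 < x" "x < y" shows "R m y < R m x"
proof -
  have "(\<Sum>i<Suc m. inverse (fact i * y ^ (Suc m - i))) < (\<Sum>i<Suc m. inverse (fact i * x ^ (Suc m - i)))"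
  proof (rule sum_strict_mono)
    fix i assume "i \<in> {..<Suc m}"
    hence "Suc m - i \<noteq> 0" by auto
    hence "x ^ (Suc m - i) < y ^ (Suc m - i)" using assms by (intro power_strict_mono) auto
    hence "fact i * x ^ (Suc m - i) < fact i * y ^ (Suc m - i)" by simp
    thus "inverse (fact i * y ^ (Suc m - i)) < inverse (fact i * x ^ (Suc m - i))"
      using assms by (intro less_imp_inverse_less) auto
  qed auto
  thus ?thesis unfolding R_def by simp
qed

lemma deriv_S: "((\<lambda>x. \<Sum>i<Suc n. x ^ i / fact i) has_real_derivative (\<Sum>i<n. x ^ i / fact i)) (at x)"
proof (induction n)
  case 0 then show ?case by simp
next
  case (Suc n)
  have p: "((\<lambda>x. x ^ Suc n) has_real_derivative real (Suc n) * x ^ n) (at x)"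
    using DERIV_pow[of "Suc n" x] by simp
  have "real (Suc n) * x ^ n / fact (Suc n) = x ^ n / fact n"
    unfolding fact_Suc by (simp del: of_nat_Suc)
  with DERIV_cdivide[OF p, of "fact (Suc n)"]
  have "((\<lambda>x. x ^ Suc n / fact (Suc n)) has_real_derivative x ^ n / fact n) (at x)" by simp
  from DERIV_add[OF Suc this] show ?case by simp
qed

definition h :: "nat \<Rightarrow> real \<Rightarrow> real" where
  "h m x = x * (\<Sum>i<Suc m. x ^ i / fact i) * exp (- x)"

lemma deriv_h: "(h m has_real_derivative exp (- x) * Qpoly (Suc m) x) (at x)"
proof -
  have e: "(\<Sum>i<Suc m. x ^ i / fact i) = (\<Sum>i<m. x ^ i / fact i) + x ^ m / fact m" by simp
  have E: "((\<lambda>x. exp (- x)) has_real_derivative exp (- x) * (- 1)) (at x)"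
    by (auto intro!: derivative_eq_intros)
  have "(h m has_real_derivative
     (1 * (\<Sum>i<Suc m. x ^ i / fact i) + (\<Sum>i<m. x ^ i / fact i) * x) * exp (- x)
       + exp (- x) * (- 1) * (x * (\<Sum>i<Suc m. x ^ i / fact i))) (at x)"
    unfolding h_def by (rule DERIV_mult[OF DERIV_mult[OF DERIV_ident deriv_S] E])
  moreover have "(1 * (\<Sum>i<Suc m. x ^ i / fact i) + (\<Sum>i<m. x ^ i / fact i) * x) * exp (- x)
       + exp (- x) * (- 1) * (x * (\<Sum>i<Suc m. x ^ i / fact i)) = exp (- x) * Qpoly (Suc m) x"
    unfolding Q_Suc e by (simp add: algebra_simps)
  ultimately show ?thesis by simp
qed

lemma root_exists: "\<exists>g. real (Suc m) / 2 \<le> g \<and> g \<le> real (Suc m) \<and> Qpoly (Suc m) g = 0"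
proof -
  have "continuous_on {real (Suc m) / 2 .. real (Suc m)} (Qpoly (Suc m))"
    unfolding Qpoly_def by (intro continuous_intros) auto
  from IVT2'[OF Q_at_L Q_at_half _ this] show ?thesis by auto
qed

lemma Q_pos: assumes "0 < x" "x < g" "Qpoly (Suc m) g = 0" shows "Qpoly (Suc m) x > 0"
proof -
  have "R m g = 0" using Q_R[of g m] assms by simp
  with R_mono[OF assms(1,2), of m] have "R m x > 0" by simp
  thus ?thesis using Q_R[of x m] assms by simp
qed

lemma Q_neg: assumes "0 < g" "g < x" "Qpoly (Suc m) g = 0" shows "Qpoly (Suc m) x < 0"
proof -
  have "R m g = 0" using Q_R[of g m] assms by simp
  with R_mono[OF assms(1,2), of m] have "R m x < 0" by simp
  moreover have "x ^ Suc m > 0" using assms by simp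
  ultimately show ?thesis using Q_R[of x m] assms by (simp add: mult_pos_neg)
qed

lemma Q_unique: assumes "0 < g" "Qpoly (Suc m) g = 0" "0 < t" "Qpoly (Suc m) t = 0" shows "t = g"
  using Q_pos[of t g m] Q_neg[of g t m] assms by (cases t g rule: linorder_cases) auto

lemma h_max: assumes "0 < g" "Qpoly (Suc m) g = 0" "0 \<le> x" "x \<noteq> g" shows "h m x < h m g"
proof (cases "x < g")
  case True
  obtain z where z: "x < z" "z < g" "h m g - h m x = (g - x) * (exp (- z) * Qpoly (Suc m) z)"
    using MVT2[OF True deriv_h] by blast
  have "Qpoly (Suc m) z > 0" using Q_pos[of z g m] z assms by simp
  hence "(g - x) * (exp (- z) * Qpoly (Suc m) z) > 0" using True by simp
  with z show ?thesis by simp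
next
  case False
  hence gx: "g < x" using assms by simp
  obtain z where z: "g < z" "z < x" "h m x - h m g = (x - g) * (exp (- z) * Qpoly (Suc m) z)"
    using MVT2[OF gx deriv_h] by blast
  have "Qpoly (Suc m) z < 0" using Q_neg[of g z m] z assms by simp
  hence "(x - g) * (exp (- z) * Qpoly (Suc m) z) < 0" using gx by (simp add: mult_pos_neg)
  with z show ?thesis by simp
qed

lemma Delta_pos: assumes "alpha > 2" shows "Delta alpha > 0"
proof -
  have "2 / alpha < 1" using assms by simp
  moreover have "2 / alpha > 0" using assms by simp
  ultimately show ?thesis unfolding Delta_def by simp
qed

lemma throughput_h:
  assumes "c = Delta alpha * gamma powr (2 / alpha)" "c > 0"
  shows "throughput (Suc m) alpha gamma lambda = h m (lambda * c) / c"
proof -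
  have e: "lambda * Delta alpha * gamma powr (2 / alpha) = lambda * c" using assms(1) by (simp add: mult.assoc)
  show ?thesis unfolding throughput_def outage_def h_def e using assms(2)
    by (simp del: sum.lessThan_Suc)
qed

theorem corollary1:
  fixes L :: nat and alpha gamma :: real
  assumes "L \<ge> 1" and "alpha > 2" and "gamma > 0"
  shows "\<exists>g::real. g > 0 \<and> Qpoly L g = 0
           \<and> (\<forall>t>0. Qpoly L t = 0 \<longrightarrow> t = g)
           \<and> real L / 2 \<le> g \<and> g \<le> real L
           \<and> (let lmax = g / (Delta alpha * gamma powr (2 / alpha)) in
                (\<forall>lambda\<ge>0. lambda \<noteq> lmax \<longrightarrow>
                    throughput L alpha gamma lambda < throughput L alpha gamma lmax)
                \<and> throughput L alpha gamma lmax
                    = g ^ (L + 1) / (fact (L - 1) * Delta alpha * gamma powr (2 / alpha))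
                      * exp (- g))"
proof -
  obtain m where L: "L = Suc m" using assms(1) by (cases L) auto
  define c where "c = Delta alpha * gamma powr (2 / alpha)"
  have c: "c > 0" unfolding c_def using Delta_pos[OF assms(2)] assms(3) by simp
  obtain g where g: "real (Suc m) / 2 \<le> g" "g \<le> real (Suc m)" "Qpoly (Suc m) g = 0"
    using root_exists by blast
  have "real (Suc m) / 2 > 0" by simp
  hence gpos: "g > 0" using g(1) by linarith
  have T: "\<And>l. throughput L alpha gamma l = h m (l * c) / c"
    unfolding L by (rule throughput_h[OF c_def c])
  have lc: "g / c * c = g" using c by simp
  have max: "\<forall>lambda\<ge>0. lambda \<noteq> g / c \<longrightarrow>
                    throughput L alpha gamma lambda < throughput L alpha gamma (g / c)"
  proof (intro allI impI)
    fix l :: real assume l: "l \<ge> 0" "l \<noteq> g / c"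
    have "l * c \<noteq> g" using l c by (auto simp: field_simps)
    moreover have "l * c \<ge> 0" using l c by simp
    ultimately have "h m (l * c) < h m g" using h_max[OF gpos g(3)] by blast
    thus "throughput L alpha gamma l < throughput L alpha gamma (g / c)"
      unfolding T lc using c by (simp add: divide_strict_right_mono)
  qed
  have S: "(\<Sum>i<Suc m. g ^ i / fact i) = g * (g ^ m / fact m)"
    using g(3) unfolding Q_Suc by simp
  have val: "throughput L alpha gamma (g / c) = g ^ (L + 1) / (fact (L - 1) * Delta alpha * gamma powr (2 / alpha)) * exp (- g)"
  proof -
    have "throughput L alpha gamma (g / c) = h m g / c" unfolding T lc ..
    also have "\<dots> = g ^ (L + 1) / (fact (L - 1) * c) * exp (- g)"
      unfolding h_def S L using c by (simp add: field_simps)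
    finally show ?thesis by (simp add: c_def mult.assoc)
  qed
  have u: "\<forall>t>0. Qpoly L t = 0 \<longrightarrow> t = g"
    unfolding L using Q_unique[OF gpos g(3)] by blast
  have b: "real L / 2 \<le> g" "g \<le> real L" unfolding L using g(1,2) by simp_all
  have lt: "(let lmax = g / (Delta alpha * gamma powr (2 / alpha)) in
                (\<forall>lambda\<ge>0. lambda \<noteq> lmax \<longrightarrow>
                    throughput L alpha gamma lambda < throughput L alpha gamma lmax)
                \<and> throughput L alpha gamma lmax
                    = g ^ (L + 1) / (fact (L - 1) * Delta alpha * gamma powr (2 / alpha))
                      * exp (- g))"
    unfolding Let_def c_def[symmetric] using max val by blast
  show ?thesis
    using gpos g(3) u b lt unfolding L[symmetric] by blast
qed

end
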